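(* Let $f:\mathbb{R}^d\to\mathbb{R}$ be a two-layer linear network $f(x)=A\frac{1}{\sqrt{k}}Bx$ with $A\in\mathbb{R}^{1\times k}$, $B\in\mathbb{R}^{k\times d}$, where both $A$ and $B$ are trained. Let $X\in\mathbb{R}^{d\times n}$, $y\in\mathbb{R}^{1\times n}$ be a dataset, and let $A^{(t)},B^{(t)}$ be the weights after $t$ steps of (simultaneous) gradient descent on the loss $\frac12\|y-A\frac{1}{\sqrt k}BX\|_2^2$ with constant learning rate $\eta>0$, with $f^{(t)}(x)=A^{(t)}\frac{1}{\sqrt k}B^{(t)}x$. Suppose $\{A^{(0)}_i\}_{i=1}^k$ are i.i.d. random variables with $\mathbb{E}[(A_i^{(0)})^2]=1$ and $B^{(0)}=\mathbf{0}$. Then $$\lim_{k\to\infty}{B^{(2)}}^TB^{(2)}=\lim_{k\to\infty}\nabla f^{(2)}\,{\nabla f^{(2)}}^T,$$ where $\nabla f^{(2)}\in\mathbb{R}^d$ is the (constant) gradient of the linear map $f^{(2)}$.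
   Context: The network width $k$ is sent to infinity, with $A^{(0)}$ drawn i.i.d. for each $k$; all quantities depend on $k$. *)

theory Defs
  imports "HOL-Probability.Probability"
begin

text \<open>A is a vector of length k, represented as nat => real (entries i < k used);
  B is a k x d matrix, represented by its rows B i :: real^'d (rows i < k used).
  The data matrix X is d x n (type real^'n^'d), labels y are 1 x n (real^'n).\<close>

definition net_out :: "nat \<Rightarrow> (nat \<Rightarrow> real) \<Rightarrow> (nat \<Rightarrow> real^'d) \<Rightarrow> real^'d \<Rightarrow> real" where
  "net_out k A B x = (1 / sqrt (real k)) * (\<Sum>i<k. A i * (B i \<bullet> x))"

definition lin_loss :: "nat \<Rightarrow> real^'n^'d \<Rightarrow> real^'n \<Rightarrow> (nat \<Rightarrow> real) \<Rightarrow> (nat \<Rightarrow> real^'d) \<Rightarrow> real" where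
  "lin_loss k X y A B = 1/2 * (\<Sum>m\<in>UNIV. (y $ m - net_out k A B (\<chi> j. X $ j $ m))\<^sup>2)"

definition gradA :: "nat \<Rightarrow> real^'n^'d \<Rightarrow> real^'n \<Rightarrow> (nat \<Rightarrow> real) \<Rightarrow> (nat \<Rightarrow> real^'d) \<Rightarrow> nat \<Rightarrow> real" where
  "gradA k X y A B i = deriv (\<lambda>a. lin_loss k X y (A(i := a)) B) (A i)"

definition gradB :: "nat \<Rightarrow> real^'n^'d \<Rightarrow> real^'n \<Rightarrow> (nat \<Rightarrow> real) \<Rightarrow> (nat \<Rightarrow> real^'d) \<Rightarrow> nat \<Rightarrow> 'd \<Rightarrow> real" where
  "gradB k X y A B i j =
     deriv (\<lambda>b. lin_loss k X y A (B(i := (\<chi> l. if l = j then b else B i $ l)))) (B i $ j)"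

definition gd_step :: "nat \<Rightarrow> real \<Rightarrow> real^'n^'d \<Rightarrow> real^'n \<Rightarrow>
    (nat \<Rightarrow> real) \<times> (nat \<Rightarrow> real^'d) \<Rightarrow> (nat \<Rightarrow> real) \<times> (nat \<Rightarrow> real^'d)" where
  "gd_step k eta X y AB = (case AB of (A, B) \<Rightarrow>
     ((\<lambda>i. A i - eta * gradA k X y A B i),
      (\<lambda>i. \<chi> j. B i $ j - eta * gradB k X y A B i j)))"

definition gd :: "nat \<Rightarrow> real \<Rightarrow> real^'n^'d \<Rightarrow> real^'n \<Rightarrow> (nat \<Rightarrow> real) \<Rightarrow> (nat \<Rightarrow> real^'d) \<Rightarrow> nat \<Rightarrow>
    (nat \<Rightarrow> real) \<times> (nat \<Rightarrow> real^'d)" where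
  "gd k eta X y A0 B0 t = (gd_step k eta X y ^^ t) (A0, B0)"

definition gram :: "nat \<Rightarrow> (nat \<Rightarrow> real^'d) \<Rightarrow> real^'d^'d" where
  "gram k B = (\<chi> j l. \<Sum>i<k. B i $ j * B i $ l)"

definition net_grad :: "nat \<Rightarrow> (nat \<Rightarrow> real) \<Rightarrow> (nat \<Rightarrow> real^'d) \<Rightarrow> real^'d" where
  "net_grad k A B = (1 / sqrt (real k)) *\<^sub>R (\<Sum>i<k. A i *\<^sub>R B i)"

definition outer :: "real^'d \<Rightarrow> real^'d^'d" where
  "outer g = (\<chi> j l. g $ j * g $ l)"

definition conv_in_prob :: "'a measure \<Rightarrow> (nat \<Rightarrow> 'a \<Rightarrow> 'b::metric_space) \<Rightarrow> 'b \<Rightarrow> bool" where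
  "conv_in_prob M Z L \<longleftrightarrow>
     (\<forall>k. Z k \<in> borel_measurable M) \<and>
     (\<forall>e>0. (\<lambda>k. measure M {\<omega> \<in> space M. e < dist (Z k \<omega>) L}) \<longlonglongrightarrow> 0)"

end

theory Submission
  imports Defs
begin

definition xc :: "real^'n^'d \<Rightarrow> 'n \<Rightarrow> real^'d" where "xc X m = (\<chi> j. X $ j $ m)"

lemma xc_nth: "xc X m $ j = X $ j $ m" by (simp add: xc_def)

lemma lin_loss_alt: "lin_loss k X y A B = 1/2 * (\<Sum>m\<in>UNIV. (y $ m - net_out k A B (xc X m))\<^sup>2)"
  by (simp add: lin_loss_def xc_def)

lemma net_out_updA:
  "net_out k (A(i:=a)) B x = net_out k A B x + (a - A i) * (if i<k then (1/sqrt k)*(B i \<bullet> x) else 0)"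
proof -
  have "(\<Sum>i'<k. (A(i:=a)) i' * (B i' \<bullet> x)) = (\<Sum>i'<k. A i' * (B i' \<bullet> x) + (if i' = i then (a - A i) * (B i \<bullet> x) else 0))"
    by (intro sum.cong) (auto simp: algebra_simps)
  also have "\<dots> = (\<Sum>i'<k. A i' * (B i' \<bullet> x)) + (if i < k then (a - A i) * (B i \<bullet> x) else 0)"
    by (simp add: sum.distrib)
  finally have eq: "(\<Sum>i'<k. (A(i:=a)) i' * (B i' \<bullet> x)) = (\<Sum>i'<k. A i' * (B i' \<bullet> x)) + (if i < k then (a - A i) * (B i \<bullet> x) else 0)" .
  show ?thesis unfolding net_out_def eq by (cases "i<k") (simp_all add: ring_distribs diff_divide_distrib)
qed

lemma net_out_updB:
  "net_out k A (B(i := (\<chi> l. if l = j then b else B i $ l))) x = net_out k A B x + (b - B i $ j) * (if i<k then (1/sqrt k)*A i * x $ j else 0)"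
proof -
  have inn: "(\<chi> l. if l = j then b else B i $ l) \<bullet> x = B i \<bullet> x + (b - B i $ j) * x $ j"
  proof -
    have "(\<chi> l. if l = j then b else B i $ l) \<bullet> x = (\<Sum>l\<in>UNIV. B i $ l * x $ l + (if l = j then (b - B i $ j) * x $ j else 0))"
      unfolding inner_vec_def by (intro sum.cong) (auto simp: algebra_simps)
    also have "\<dots> = B i \<bullet> x + (b - B i $ j) * x $ j"
      by (simp add: sum.distrib inner_vec_def)
    finally show ?thesis .
  qed
  have "(\<Sum>i'<k. A i' * ((B(i := (\<chi> l. if l = j then b else B i $ l))) i' \<bullet> x)) = (\<Sum>i'<k. A i' * (B i' \<bullet> x) + (if i' = i then A i * (b - B i $ j) * x $ j else 0))"
    by (intro sum.cong) (auto simp: algebra_simps inn)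
  also have "\<dots> = (\<Sum>i'<k. A i' * (B i' \<bullet> x)) + (if i < k then A i * (b - B i $ j) * x $ j else 0)"
    by (simp add: sum.distrib)
  finally have eq: "(\<Sum>i'<k. A i' * ((B(i := (\<chi> l. if l = j then b else B i $ l))) i' \<bullet> x)) = (\<Sum>i'<k. A i' * (B i' \<bullet> x)) + (if i < k then A i * (b - B i $ j) * x $ j else 0)" .
  show ?thesis unfolding net_out_def eq by (cases "i<k") (simp_all add: ring_distribs diff_divide_distrib mult_ac)
qed

lemma deriv_quad:
  fixes r p :: "'n::finite \<Rightarrow> real"
  shows "deriv (\<lambda>a. 1/2 * (\<Sum>m\<in>UNIV. (r m - (a - a0) * p m)\<^sup>2)) a0 = - (\<Sum>m\<in>UNIV. r m * p m)"
proof -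
  have "((\<lambda>a. 1/2 * (\<Sum>m\<in>UNIV. (r m - (a - a0) * p m)\<^sup>2)) has_real_derivative
      - (\<Sum>m\<in>UNIV. r m * p m)) (at a0)"
    apply (rule derivative_eq_intros refl)+
    apply (simp add: sum_negf sum_distrib_right sum_distrib_left mult_ac)
    done
  then show ?thesis by (rule DERIV_imp_deriv)
qed

lemma gradA_eq: "gradA k X y A B i =
   - (\<Sum>m\<in>UNIV. (y $ m - net_out k A B (xc X m)) * (if i<k then (1/sqrt k)*(B i \<bullet> xc X m) else 0))"
proof -
  have "(\<lambda>a. lin_loss k X y (A(i := a)) B) = (\<lambda>a. 1/2 * (\<Sum>m\<in>UNIV. ((y $ m - net_out k A B (xc X m)) - (a - A i) * (if i<k then (1/sqrt k)*(B i \<bullet> xc X m) else 0))\<^sup>2))"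
    by (rule ext) (simp add: lin_loss_alt net_out_updA algebra_simps)
  then show ?thesis unfolding gradA_def by (simp only:) (rule deriv_quad)
qed

lemma gradB_eq: "gradB k X y A B i j =
   - (\<Sum>m\<in>UNIV. (y $ m - net_out k A B (xc X m)) * (if i<k then (1/sqrt k)*A i * xc X m $ j else 0))"
proof -
  have "(\<lambda>b. lin_loss k X y A (B(i := (\<chi> l. if l = j then b else B i $ l)))) = (\<lambda>b. 1/2 * (\<Sum>m\<in>UNIV. ((y $ m - net_out k A B (xc X m)) - (b - B i $ j) * (if i<k then (1/sqrt k)*A i * xc X m $ j else 0))\<^sup>2))"
    by (rule ext) (simp add: lin_loss_alt net_out_updB algebra_simps)
  then show ?thesis unfolding gradB_def by (simp only:) (rule deriv_quad)
qed

definition vv :: "real^'n^'d \<Rightarrow> real^'n \<Rightarrow> real^'d" where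
  "vv X y = (\<chi> j. \<Sum>m\<in>UNIV. y $ m * X $ j $ m)"
definition SS :: "nat \<Rightarrow> (nat \<Rightarrow> real) \<Rightarrow> real" where
  "SS k A = (\<Sum>i<k. (A i)\<^sup>2) / real k"
definition rr :: "real^'n^'d \<Rightarrow> real^'n \<Rightarrow> real \<Rightarrow> real \<Rightarrow> 'n \<Rightarrow> real" where
  "rr X y eta s m = y $ m - eta * s * (vv X y \<bullet> xc X m)"
definition cc :: "real^'n^'d \<Rightarrow> real^'n \<Rightarrow> real \<Rightarrow> real \<Rightarrow> real" where
  "cc X y eta s = (\<Sum>m\<in>UNIV. rr X y eta s m * (vv X y \<bullet> xc X m))"
definition uu :: "real^'n^'d \<Rightarrow> real^'n \<Rightarrow> real \<Rightarrow> real \<Rightarrow> real^'d" where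
  "uu X y eta s = vv X y + (\<chi> j. \<Sum>m\<in>UNIV. rr X y eta s m * X $ j $ m)"
definition Gfun :: "real^'n^'d \<Rightarrow> real^'n \<Rightarrow> real \<Rightarrow> real \<Rightarrow> real^'d^'d" where
  "Gfun X y eta s = (\<chi> j l. eta\<^sup>2 * s * (uu X y eta s $ j * uu X y eta s $ l))"
definition Hfun :: "real^'n^'d \<Rightarrow> real^'n \<Rightarrow> real \<Rightarrow> real \<Rightarrow> real \<Rightarrow> real^'d^'d" where
  "Hfun X y eta s t = outer ((eta * s * (1 + eta\<^sup>2 * cc X y eta s * t)) *\<^sub>R uu X y eta s)"

lemma sqrt_inv_sq: "1 / sqrt (real k) * (1 / sqrt (real k)) = 1 / real k"
  by (simp add: divide_simps)

lemma step1:
  fixes X :: "real^'n^'d"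
  shows "gd_step k eta X y (A, (\<lambda>i. 0)) = (A, (\<lambda>i. (if i<k then eta / sqrt k * A i else 0) *\<^sub>R vv X y))"
proof -
  have n0: "net_out k A (\<lambda>i. 0) x = 0" for x :: "real^'d"
    by (simp add: net_out_def)
  have gA: "gradA k X y A (\<lambda>i. 0) i = 0" for i
    by (cases "i<k") (simp_all add: gradA_eq n0)
  have gB: "0 - eta * gradB k X y A (\<lambda>i. 0) i j = (if i<k then eta / sqrt k * A i else 0) * vv X y $ j" for i j
    by (cases "i<k") (simp_all add: gradB_eq n0 vv_def xc_nth sum_distrib_left sum_negf mult_ac)
  show ?thesis unfolding gd_step_def using gA gB
    by (simp add: fun_eq_iff vec_eq_iff)
qed

lemma step2:
  fixes X :: "real^'n^'d" and k :: nat and eta :: real and A :: "nat \<Rightarrow> real"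
  defines "e \<equiv> (\<lambda>i. if i<k then eta / sqrt k * A i else 0)"
  shows "gd_step k eta X y (A, (\<lambda>i. e i *\<^sub>R vv X y)) =
     ((\<lambda>i. A i + (if i < k then eta\<^sup>2 / real k * A i * cc X y eta (SS k A) else 0)),
      (\<lambda>i. e i *\<^sub>R uu X y eta (SS k A)))"
proof -
  define B1 where "B1 = (\<lambda>i. e i *\<^sub>R vv X y)"
  have sq: "(\<Sum>i<k. A i * (e i * z)) = eta * SS k A * sqrt k * z" for z
  proof -
    have "(\<Sum>i<k. A i * (e i * z)) = (\<Sum>i<k. eta / sqrt k * z * (A i)\<^sup>2)"
      by (intro sum.cong) (auto simp: e_def power2_eq_square)
    also have "\<dots> = eta / sqrt k * z * (\<Sum>i<k. (A i)\<^sup>2)"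
      by (simp add: sum_distrib_left)
    also have "\<dots> = eta * SS k A * sqrt k * z"
      by (cases "k = 0") (auto simp: SS_def divide_simps)
    finally show ?thesis .
  qed
  have n1: "net_out k A B1 x = eta * SS k A * (vv X y \<bullet> x)" for x :: "real^'d"
    using sq[of "vv X y \<bullet> x"] by (cases "k = 0") (simp_all add: net_out_def B1_def SS_def)
  have rr: "y $ m - net_out k A B1 (xc X m) = rr X y eta (SS k A) m" for m
    by (simp add: n1 rr_def)
  have gA: "A i - eta * gradA k X y A B1 i = A i + (if i < k then eta\<^sup>2 / real k * A i * cc X y eta (SS k A) else 0)" for i
  proof (cases "i < k")
    case True
    have "gradA k X y A B1 i = - (\<Sum>m\<in>UNIV. rr X y eta (SS k A) m * (1 / sqrt k * (e i * (vv X y \<bullet> xc X m))))"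
      using True by (simp add: gradA_eq rr) (simp add: B1_def)
    also have "\<dots> = - (eta / real k * A i * cc X y eta (SS k A))"
      using True by (simp add: e_def cc_def sum_distrib_left divide_simps mult_ac)
    finally show ?thesis using True by (simp add: power2_eq_square)
  qed (simp add: gradA_eq)
  have gB: "B1 i $ j - eta * gradB k X y A B1 i j = e i * uu X y eta (SS k A) $ j" for i j
  proof (cases "i < k")
    case True
    have "gradB k X y A B1 i j = - (\<Sum>m\<in>UNIV. rr X y eta (SS k A) m * (1 / sqrt k * A i * X $ j $ m))"
      using True by (simp add: gradB_eq rr xc_nth)
    also have "\<dots> = - (1 / sqrt k * A i * (\<Sum>m\<in>UNIV. rr X y eta (SS k A) m * X $ j $ m))"
      by (simp add: sum_distrib_left mult_ac)
    finally show ?thesis using True by (simp add: B1_def e_def uu_def algebra_simps)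
  qed (simp add: gradB_eq B1_def e_def)
  show ?thesis unfolding gd_step_def B1_def[symmetric] using gA gB
    by (simp add: fun_eq_iff vec_eq_iff)
qed

lemma gd2:
  fixes X :: "real^'n^'d"
  shows "gd k eta X y A (\<lambda>i. 0) 2 =
     ((\<lambda>i. A i + (if i < k then eta\<^sup>2 / real k * A i * cc X y eta (SS k A) else 0)),
      (\<lambda>i. (if i<k then eta / sqrt k * A i else 0) *\<^sub>R uu X y eta (SS k A)))"
proof -
  have f2: "(f ^^ 2) z = f (f z)" for f :: "'b \<Rightarrow> 'b" and z by (simp add: numeral_2_eq_2)
  show ?thesis unfolding gd_def f2 by (simp add: step1 step2)
qed

lemma sumsq_e: "(\<Sum>i<k. (if i<k then eta / sqrt k * A i else 0) * (if i<k then eta / sqrt k * A i else 0)) = eta\<^sup>2 * SS k A"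
proof -
  have "(\<Sum>i<k. (if i<k then eta / sqrt k * A i else 0) * (if i<k then eta / sqrt k * A i else 0)) = (\<Sum>i<k. eta\<^sup>2 / real k * (A i)\<^sup>2)"
    by (intro sum.cong) (auto simp: power2_eq_square divide_simps)
  also have "\<dots> = eta\<^sup>2 / real k * (\<Sum>i<k. (A i)\<^sup>2)"
    by (rule sum_distrib_left[symmetric])
  also have "\<dots> = eta\<^sup>2 * SS k A"
    by (simp add: SS_def)
  finally show ?thesis .
qed

lemma gram_gd2:
  fixes X :: "real^'n^'d"
  shows "gram k (snd (gd k eta X y A (\<lambda>i. 0) 2)) = Gfun X y eta (SS k A)"
proof -
  have "(\<Sum>i<k. (if i<k then eta / sqrt k * A i else 0) * u * ((if i<k then eta / sqrt k * A i else 0) * w)) = eta\<^sup>2 * SS k A * (u * w)" for u w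
  proof -
    have "(\<Sum>i<k. (if i<k then eta / sqrt k * A i else 0) * u * ((if i<k then eta / sqrt k * A i else 0) * w))
       = (\<Sum>i<k. (if i<k then eta / sqrt k * A i else 0) * (if i<k then eta / sqrt k * A i else 0)) * (u * w)"
      unfolding sum_distrib_right by (intro sum.cong) (auto simp: mult_ac)
    then show ?thesis using sumsq_e[of k eta A] by simp
  qed
  then show ?thesis by (simp add: gd2 gram_def Gfun_def vec_eq_iff)
qed

lemma grad_gd2:
  fixes X :: "real^'n^'d"
  shows "outer (case gd k eta X y A (\<lambda>i. 0) 2 of (A, B) \<Rightarrow> net_grad k A B) = Hfun X y eta (SS k A) (1 / real k)"
proof -
  let ?c = "cc X y eta (SS k A)"
  have "(\<Sum>i<k. (A i + (if i < k then eta\<^sup>2 / real k * A i * ?c else 0)) * (if i<k then eta / sqrt k * A i else 0))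
      = (\<Sum>i<k. (1 + eta\<^sup>2 * ?c * (1 / real k)) * (eta / sqrt k) * (A i)\<^sup>2)"
    by (intro sum.cong) (auto simp: power2_eq_square algebra_simps)
  also have "\<dots> = (1 + eta\<^sup>2 * ?c * (1 / real k)) * (eta / sqrt k) * (\<Sum>i<k. (A i)\<^sup>2)"
    by (simp add: sum_distrib_left)
  finally have ch: "(\<Sum>i<k. (A i + (if i < k then eta\<^sup>2 / real k * A i * ?c else 0)) * (if i<k then eta / sqrt k * A i else 0))
      = (1 + eta\<^sup>2 * ?c * (1 / real k)) * (eta / sqrt k) * (\<Sum>i<k. (A i)\<^sup>2)" .
  have eq: "1 / sqrt k * (\<Sum>i<k. (A i + (if i < k then eta\<^sup>2 / real k * A i * ?c else 0)) * (if i<k then eta / sqrt k * A i else 0))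
     = eta * SS k A * (1 + eta\<^sup>2 * ?c * (1 / real k))"
  proof (cases "k = 0")
    case False
    have sk: "sqrt (real k) * sqrt (real k) = real k" by simp
    have "1 / sqrt k * ((1 + eta\<^sup>2 * ?c * (1 / real k)) * (eta / sqrt k) * (\<Sum>i<k. (A i)\<^sup>2))
       = eta * SS k A * (1 + eta\<^sup>2 * ?c * (1 / real k))"
      using False sk by (simp add: field_simps SS_def)
    then show ?thesis unfolding ch .
  qed (simp add: SS_def)
  have "net_grad k (\<lambda>i. A i + (if i < k then eta\<^sup>2 / real k * A i * ?c else 0))
      (\<lambda>i. (if i<k then eta / sqrt k * A i else 0) *\<^sub>R uu X y eta (SS k A))
     = (1 / sqrt k * (\<Sum>i<k. (A i + (if i < k then eta\<^sup>2 / real k * A i * ?c else 0)) * (if i<k then eta / sqrt k * A i else 0))) *\<^sub>R uu X y eta (SS k A)"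
    unfolding net_grad_def by (simp add: scaleR_sum_left[symmetric])
  then show ?thesis unfolding eq gd2 by (simp add: Hfun_def)
qed

lemma conv_compose:
  fixes Z :: "nat \<Rightarrow> 'a \<Rightarrow> real" and F :: "real \<Rightarrow> real \<Rightarrow> 'b::{metric_space, second_countable_topology}"
  assumes P: "prob_space M"
    and conv: "conv_in_prob M Z 1"
    and cont: "continuous_on UNIV (\<lambda>p. F (fst p) (snd p))"
  shows "conv_in_prob M (\<lambda>k \<omega>. F (Z k \<omega>) (1 / real k)) (F 1 0)"
proof -
  interpret prob_space M by (rule P)
  have measZ[measurable]: "Z k \<in> borel_measurable M" for k using conv by (simp add: conv_in_prob_def)
  have Fm: "(\<lambda>p. F (fst p) (snd p)) \<in> borel_measurable borel"
    by (rule borel_measurable_continuous_onI[OF cont])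
  have measF[measurable]: "(\<lambda>\<omega>. F (Z k \<omega>) (1 / real k)) \<in> borel_measurable M" for k
  proof -
    have "(\<lambda>\<omega>. (Z k \<omega>, 1 / real k)) \<in> borel_measurable M" by measurable
    from measurable_compose[OF this Fm] show ?thesis by simp
  qed
  show ?thesis unfolding conv_in_prob_def
  proof (intro conjI allI impI measF)
    fix e :: real assume e: "e > 0"
    from cont e obtain d where d: "d > 0" and dd0: "\<forall>p\<in>UNIV. dist p (1, 0) < d \<longrightarrow> dist (F (fst p) (snd p)) (F (fst (1::real,0::real)) (snd (1::real,0::real))) < e"
      unfolding continuous_on_iff by blast
    have dd: "dist (F (fst p) (snd p)) (F 1 0) < e" if "dist p (1, 0) < d" for p
      using dd0 that by simp
    have g: "(\<lambda>k. measure M {\<omega> \<in> space M. d/4 < dist (Z k \<omega>) 1}) \<longlonglongrightarrow> 0"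
    proof -
      have "d/4 > 0" using d by simp
      then show ?thesis using conv unfolding conv_in_prob_def by blast
    qed
    have ev: "eventually (\<lambda>k. 1 / real k < d/2) sequentially"
    proof -
      obtain N :: nat where N: "2 / d < real N" using reals_Archimedean2 by blast
      show ?thesis unfolding eventually_sequentially
      proof (intro exI allI impI)
        fix k assume "N \<le> k"
        then have "real N \<le> real k" by simp
        then have k1: "2 / d < real k" using N by linarith
        moreover have "0 < 2 / d" using d by simp
        ultimately have "real k > 0" by linarith
        with k1 show "1 / real k < d/2" using d by (simp add: field_simps)
      qed
    qed
    have le: "eventually (\<lambda>k. measure M {\<omega> \<in> space M. e < dist (F (Z k \<omega>) (1 / real k)) (F 1 0)}
                 \<le> measure M {\<omega> \<in> space M. d/4 < dist (Z k \<omega>) 1}) sequentially"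
      using ev
    proof eventually_elim
      case (elim k)
      show ?case
      proof (rule finite_measure_mono)
        show "{\<omega> \<in> space M. d/4 < dist (Z k \<omega>) 1} \<in> sets M" by measurable
        show "{\<omega> \<in> space M. e < dist (F (Z k \<omega>) (1 / real k)) (F 1 0)} \<subseteq> {\<omega> \<in> space M. d/4 < dist (Z k \<omega>) 1}"
        proof safe
          fix \<omega> assume \<omega>: "\<omega> \<in> space M" and big: "e < dist (F (Z k \<omega>) (1 / real k)) (F 1 0)"
          show "d/4 < dist (Z k \<omega>) 1"
          proof (rule ccontr)
            assume "\<not> d/4 < dist (Z k \<omega>) 1"
            then have a: "dist (Z k \<omega>) 1 < d/2" using d by simp
            have b: "dist (1 / real k) 0 < d/2" using elim by simp
            have "dist (Z k \<omega>, 1 / real k) (1, 0) < d"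
              unfolding dist_Pair_Pair by (rule sqrt_sum_squares_half_less[OF a b]) auto
            from dd[OF this] big show False by simp
          qed
        qed
      qed
    qed
    show "(\<lambda>k. measure M {\<omega> \<in> space M. e < dist (F (Z k \<omega>) (1 / real k)) (F 1 0)}) \<longlonglongrightarrow> 0"
      by (rule tendsto_sandwich[OF _ le tendsto_const g]) simp
  qed
qed

definition Pt :: "real \<Rightarrow> real \<Rightarrow> real" where "Pt T x = (if x\<^sup>2 \<le> T then x\<^sup>2 else 0)"
definition Qt :: "real \<Rightarrow> real \<Rightarrow> real" where "Qt T x = (if x\<^sup>2 \<le> T then 0 else x\<^sup>2)"

lemma Pt_meas[measurable]: "Pt T \<in> borel_measurable borel"
  unfolding Pt_def by measurable
lemma Qt_meas[measurable]: "Qt T \<in> borel_measurable borel"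
  unfolding Qt_def by measurable
lemma PQ: "Pt T x + Qt T x = x\<^sup>2" by (simp add: Pt_def Qt_def)
lemma Pt_nn: "0 \<le> Pt T x" by (simp add: Pt_def)
lemma Qt_nn: "0 \<le> Qt T x" by (simp add: Qt_def)
lemma Pt_le: "T \<ge> 0 \<Longrightarrow> Pt T x \<le> T" by (simp add: Pt_def)
lemma Pt_le2: "Pt T x \<le> x\<^sup>2" by (simp add: Pt_def)
lemma Qt_le2: "Qt T x \<le> x\<^sup>2" by (simp add: Qt_def)
lemma Pt_sq: "T \<ge> 0 \<Longrightarrow> (Pt T x)\<^sup>2 \<le> T * x\<^sup>2"
  by (simp add: Pt_def power2_eq_square mult_right_mono)

lemma tail_small:
  fixes \<mu> :: "real measure"
  assumes "integrable \<mu> (\<lambda>x. x\<^sup>2)" "r > 0" and sets_mu: "sets \<mu> = sets borel"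
  shows "\<exists>n::nat. integral\<^sup>L \<mu> (Qt (real n)) < r"
proof -
  have "(\<lambda>n. integral\<^sup>L \<mu> (Qt (real n))) \<longlonglongrightarrow> integral\<^sup>L \<mu> (\<lambda>x. 0)"
  proof (rule integral_dominated_convergence[where w="\<lambda>x. x\<^sup>2"])
    show "(\<lambda>x. 0::real) \<in> borel_measurable \<mu>" by simp
    show "Qt (real n) \<in> borel_measurable \<mu>" for n
      using Qt_meas measurable_cong_sets[OF sets_mu refl] by blast
    show "integrable \<mu> (\<lambda>x. x\<^sup>2)" by fact
    show "AE x in \<mu>. (\<lambda>n. Qt (real n) x) \<longlonglongrightarrow> 0"
    proof (rule AE_I2)
      fix x :: real
      obtain N :: nat where "x\<^sup>2 \<le> real N" using real_nat_ceiling_ge by blast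
      then have "\<forall>n\<ge>N. Qt (real n) x = 0"
        by (auto simp: Qt_def)
      then show "(\<lambda>n. Qt (real n) x) \<longlonglongrightarrow> 0"
        by (intro tendsto_eventually) (auto simp: eventually_sequentially)
    qed
    show "AE x in \<mu>. norm (Qt (real n) x) \<le> x\<^sup>2" for n
      by (intro AE_I2) (simp add: Qt_nn Qt_le2)
  qed
  then have "(\<lambda>n. integral\<^sup>L \<mu> (Qt (real n))) \<longlonglongrightarrow> 0" by simp
  from order_tendstoD(2)[OF this assms(2)] show ?thesis
    by (auto simp: eventually_sequentially)
qed

lemma (in prob_space) wlln_bound:
  fixes Y :: "nat \<Rightarrow> 'a \<Rightarrow> real" and \<mu> :: "real measure"
  assumes meas[measurable]: "\<And>i. Y i \<in> borel_measurable M"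
    and ind: "indep_vars (\<lambda>_. borel) Y {..<k}"
    and dst: "\<And>i. i<k \<Longrightarrow> distr M borel (Y i) = \<mu>"
    and int2: "integrable \<mu> (\<lambda>x. x\<^sup>2)" and one: "integral\<^sup>L \<mu> (\<lambda>x. x\<^sup>2) = 1"
    and k: "k > 0" and T: "T \<ge> 0" and e: "e > 0" and tau: "integral\<^sup>L \<mu> (Qt T) < e/3"
  shows "measure M {\<omega>\<in>space M. e < dist (SS k (\<lambda>i. Y i \<omega>)) 1}
           \<le> 3 * integral\<^sup>L \<mu> (Qt T) / e + 9 * T / (real k * e\<^sup>2)"
proof -
  have intd: "integral\<^sup>L M (\<lambda>\<omega>. f (Y i \<omega>)) = integral\<^sup>L \<mu> f"
    if "i < k" "f \<in> borel_measurable borel" for i and f :: "real \<Rightarrow> real"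
  proof -
    have "integral\<^sup>L \<mu> f = integral\<^sup>L (distr M borel (Y i)) f" using dst[OF that(1)] by simp
    also have "\<dots> = integral\<^sup>L M (\<lambda>\<omega>. f (Y i \<omega>))" by (rule integral_distr) (use that in auto)
    finally show ?thesis by simp
  qed
  have intgd: "integrable M (\<lambda>\<omega>. f (Y i \<omega>)) \<longleftrightarrow> integrable \<mu> f"
    if "i < k" "f \<in> borel_measurable borel" for i and f :: "real \<Rightarrow> real"
  proof -
    have "integrable \<mu> f = integrable (distr M borel (Y i)) f" using dst[OF that(1)] by simp
    also have "\<dots> = integrable M (\<lambda>\<omega>. f (Y i \<omega>))" by (rule integrable_distr_eq) (use that in auto)
    finally show ?thesis by simp
  qed
  have sets_mu: "sets \<mu> = sets borel" using dst[OF k] by auto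
  interpret mu: prob_space \<mu> using dst[OF k] by (metis prob_space_distr meas)
  have mu_meas: "f \<in> borel_measurable \<mu>" if "f \<in> borel_measurable borel" for f :: "real \<Rightarrow> real"
    using that measurable_cong_sets[OF sets_mu refl] by blast
  define \<tau> where "\<tau> = integral\<^sup>L \<mu> (Qt T)"
  define m where "m = integral\<^sup>L \<mu> (Pt T)"
  have intQ: "integrable \<mu> (Qt T)"
    by (rule Bochner_Integration.integrable_bound[OF int2]) (auto intro!: mu_meas AE_I2 simp: Qt_nn Qt_le2)
  have intP: "integrable \<mu> (Pt T)"
    by (rule Bochner_Integration.integrable_bound[OF int2]) (auto intro!: mu_meas AE_I2 simp: Pt_nn Pt_le2)
  have mt: "m + \<tau> = 1"
  proof -
    have "m + \<tau> = integral\<^sup>L \<mu> (\<lambda>x. Pt T x + Qt T x)"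
      unfolding m_def \<tau>_def by (rule Bochner_Integration.integral_add[OF intP intQ, symmetric])
    then show ?thesis by (simp add: PQ one)
  qed
  have tau0: "\<tau> \<ge> 0" unfolding \<tau>_def by (intro integral_nonneg_AE AE_I2 Qt_nn)
  have m0: "m \<ge> 0" unfolding m_def by (intro integral_nonneg_AE AE_I2 Pt_nn)
  have m1: "m \<le> 1" using mt tau0 by linarith
  have Pm[measurable]: "(\<lambda>x. Pt T x - m) \<in> borel_measurable borel" by measurable
  define Z where "Z i \<omega> = Pt T (Y i \<omega>) - m" for i \<omega>
  define Zs where "Zs \<omega> = (\<Sum>i<k. Z i \<omega>)" for \<omega>
  define aQ where "aQ \<omega> = (\<Sum>i<k. Qt T (Y i \<omega>)) / real k" for \<omega>
  have Zm[measurable]: "Z i \<in> borel_measurable M" for i unfolding Z_def by measurable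
  have Zsm[measurable]: "Zs \<in> borel_measurable M" unfolding Zs_def by measurable
  have aQm[measurable]: "aQ \<in> borel_measurable M" unfolding aQ_def by measurable
  have decomp: "SS k (\<lambda>i. Y i \<omega>) - 1 = Zs \<omega> / real k + aQ \<omega> - \<tau>" for \<omega>
  proof -
    have "(\<Sum>i<k. (Y i \<omega>)\<^sup>2) = (\<Sum>i<k. Z i \<omega> + m + Qt T (Y i \<omega>))"
      by (intro sum.cong) (auto simp: Z_def PQ[symmetric])
    also have "\<dots> = Zs \<omega> + real k * m + (\<Sum>i<k. Qt T (Y i \<omega>))"
      by (simp add: Zs_def sum.distrib)
    finally have "(\<Sum>i<k. (Y i \<omega>)\<^sup>2) = Zs \<omega> + real k * m + (\<Sum>i<k. Qt T (Y i \<omega>))" .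
    moreover have "\<tau> * real k + m * real k = real k" using mt by (metis distrib_right mult_1 add.commute)
    ultimately show ?thesis using k mt unfolding SS_def aQ_def by (simp add: field_simps)
  qed
  have aQ0: "aQ \<omega> \<ge> 0" for \<omega> unfolding aQ_def by (intro divide_nonneg_nonneg sum_nonneg Qt_nn) simp
  have tau3: "\<tau> < e/3" using tau by (simp add: \<tau>_def)
  have incl: "{\<omega>\<in>space M. e < dist (SS k (\<lambda>i. Y i \<omega>)) 1} \<subseteq>
      {\<omega>\<in>space M. e/3 \<le> aQ \<omega>} \<union> {\<omega>\<in>space M. (real k * e / 3)\<^sup>2 \<le> (Zs \<omega>)\<^sup>2}"
  proof safe
    fix \<omega> assume \<omega>: "\<omega> \<in> space M" and big: "e < dist (SS k (\<lambda>i. Y i \<omega>)) 1"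
      and nq: "\<not> (real k * e / 3)\<^sup>2 \<le> (Zs \<omega>)\<^sup>2"
    have "e < \<bar>Zs \<omega> / real k + aQ \<omega> - \<tau>\<bar>" using big decomp[of \<omega>] by (simp add: dist_real_def)
    also have "\<dots> \<le> \<bar>Zs \<omega>\<bar> / real k + aQ \<omega> + \<tau>" 
    proof -
      have "\<bar>Zs \<omega> / real k\<bar> = \<bar>Zs \<omega>\<bar> / real k" by simp
      then show ?thesis using aQ0[of \<omega>] tau0 by (smt (verit))
    qed
    finally have big2: "e < \<bar>Zs \<omega>\<bar> / real k + aQ \<omega> + \<tau>" .
    have "\<bar>Zs \<omega>\<bar> < real k * e / 3"
    proof (rule ccontr)
      assume "\<not> \<bar>Zs \<omega>\<bar> < real k * e / 3"
      then have "real k * e / 3 \<le> \<bar>Zs \<omega>\<bar>" by simp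
      from power_mono[OF this, of 2] k e have "(real k * e / 3)\<^sup>2 \<le> \<bar>Zs \<omega>\<bar>\<^sup>2" by simp
      then have "(real k * e / 3)\<^sup>2 \<le> (Zs \<omega>)\<^sup>2" by simp
      with nq show False by simp
    qed
    then have "\<bar>Zs \<omega>\<bar> / real k < e / 3" using k by (simp add: field_simps)
    then show "e/3 \<le> aQ \<omega>" using big2 tau3 by linarith
  qed
  have setA: "{\<omega>\<in>space M. e/3 \<le> aQ \<omega>} \<in> sets M" by measurable
  have setB: "{\<omega>\<in>space M. (real k * e / 3)\<^sup>2 \<le> (Zs \<omega>)\<^sup>2} \<in> sets M" by measurable
  have intQY: "integrable M (\<lambda>\<omega>. Qt T (Y i \<omega>))" if "i < k" for i
    using intgd[OF that Qt_meas] intQ by simp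
  have int_aQ: "integrable M aQ" unfolding aQ_def
    by (intro integrable_divide Bochner_Integration.integrable_sum) (simp add: intQY)
  have EaQ: "integral\<^sup>L M aQ = \<tau>"
  proof -
    have "integral\<^sup>L M aQ = (\<Sum>i<k. integral\<^sup>L M (\<lambda>\<omega>. Qt T (Y i \<omega>))) / real k"
      unfolding aQ_def using intQY by (simp add: integral_sum)
    also have "\<dots> = (\<Sum>i<k. \<tau>) / real k"
      by (intro arg_cong2[where f="(/)"] sum.cong refl) (simp add: intd \<tau>_def)
    finally show ?thesis using k by simp
  qed
  have markov1: "measure M {\<omega>\<in>space M. e/3 \<le> aQ \<omega>} \<le> 3 * \<tau> / e"
  proof -
    have "measure M {\<omega>\<in>space M. aQ \<omega> \<ge> e/3} \<le> integral\<^sup>L M aQ / (e/3)"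
      by (rule integral_Markov_inequality_measure[OF int_aQ, where A="space M"]) (use e aQ0 in auto)
    then show ?thesis using EaQ by (simp add: mult.commute)
  qed
  have Zb: "\<bar>Z i \<omega>\<bar> \<le> T + 1" for i \<omega>
    using Pt_nn[of T "Y i \<omega>"] Pt_le[OF T, of "Y i \<omega>"] m0 m1 unfolding Z_def by linarith
  have intZZ: "integrable M (\<lambda>\<omega>. Z i \<omega> * Z j \<omega>)" if "i < k" "j < k" for i j
  proof (rule integrable_const_bound[where B="(T+1) * (T+1)"])
    show "AE x in M. norm (Z i x * Z j x) \<le> (T + 1) * (T + 1)"
    proof (intro AE_I2)
      fix x
      have "\<bar>Z i x\<bar> * \<bar>Z j x\<bar> \<le> (T+1)*(T+1)" by (rule mult_mono[OF Zb Zb]) (use T in auto)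
      then show "norm (Z i x * Z j x) \<le> (T + 1) * (T + 1)" by (simp add: abs_mult)
    qed
  qed (use that in measurable)
  have intZ: "integrable M (Z i)" if "i < k" for i
  proof (rule integrable_const_bound[where B="T+1"])
    show "AE x in M. norm (Z i x) \<le> T + 1" by (intro AE_I2) (simp add: Zb)
  qed (use that in measurable)
  have EZ: "integral\<^sup>L M (Z i) = 0" if "i < k" for i
  proof -
    have "integral\<^sup>L M (Z i) = integral\<^sup>L \<mu> (\<lambda>x. Pt T x - m)"
      unfolding Z_def by (rule intd[OF that Pm])
    also have "\<dots> = m - m"
      using intP by (simp add: Bochner_Integration.integral_diff m_def mu.prob_space)
    finally show ?thesis by simp
  qed
  have indZ: "indep_vars (\<lambda>_. borel) Z {..<k}"
    unfolding Z_def by (rule indep_vars_compose2[OF ind]) simp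
  have cross: "integral\<^sup>L M (\<lambda>\<omega>. Z i \<omega> * Z j \<omega>) = 0" if "i < k" "j < k" "i \<noteq> j" for i j
  proof -
    have "indep_vars (\<lambda>_. borel) Z (insert i {j})"
      by (rule indep_vars_subset[OF indZ]) (use that in auto)
    from indep_vars_sum[OF _ _ this] that have "indep_var borel (Z i) borel (\<lambda>\<omega>. \<Sum>i\<in>{j}. Z i \<omega>)" by simp
    then have iv: "indep_var borel (Z i) borel (Z j)" by simp
    have "integral\<^sup>L M (\<lambda>\<omega>. Z i \<omega> * Z j \<omega>) = integral\<^sup>L M (Z i) * integral\<^sup>L M (Z j)"
      by (rule indep_var_lebesgue_integral[OF iv intZ intZ]) (use that in auto)
    then show ?thesis using EZ that by simp
  qed
  have diag: "integral\<^sup>L M (\<lambda>\<omega>. Z i \<omega> * Z i \<omega>) \<le> T" if "i < k" for i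
  proof -
    have sqm: "(\<lambda>x. (Pt T x - m) * (Pt T x - m)) \<in> borel_measurable borel" by measurable
    have "integral\<^sup>L M (\<lambda>\<omega>. Z i \<omega> * Z i \<omega>) = integral\<^sup>L \<mu> (\<lambda>x. (Pt T x - m) * (Pt T x - m))"
      unfolding Z_def by (rule intd[OF that sqm])
    also have "\<dots> = integral\<^sup>L \<mu> (\<lambda>x. (Pt T x)\<^sup>2 + (- 2 * m) * Pt T x + m\<^sup>2)"
      by (intro Bochner_Integration.integral_cong refl) (simp add: power2_eq_square algebra_simps)
    also have "\<dots> = integral\<^sup>L \<mu> (\<lambda>x. (Pt T x)\<^sup>2) + (- 2 * m) * m + m\<^sup>2"
    proof -
      have i1: "integrable \<mu> (\<lambda>x. (Pt T x)\<^sup>2)"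
        by (rule mu.integrable_const_bound[where B="T*T"])
           (auto intro!: AE_I2 mu_meas simp: power2_eq_square Pt_nn Pt_le T mult_mono)
      have i2: "integrable \<mu> (\<lambda>x. (- 2 * m) * Pt T x)" using intP by simp
      have "integral\<^sup>L \<mu> (\<lambda>x. (Pt T x)\<^sup>2 + (- 2 * m) * Pt T x + m\<^sup>2)
          = integral\<^sup>L \<mu> (\<lambda>x. (Pt T x)\<^sup>2 + (- 2 * m) * Pt T x) + integral\<^sup>L \<mu> (\<lambda>x. m\<^sup>2)"
        by (rule Bochner_Integration.integral_add) (use i1 i2 in auto)
      also have "\<dots> = integral\<^sup>L \<mu> (\<lambda>x. (Pt T x)\<^sup>2) + integral\<^sup>L \<mu> (\<lambda>x. (- 2 * m) * Pt T x) + m\<^sup>2"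
        using i1 i2 by (simp add: mu.prob_space)
      also have "\<dots> = integral\<^sup>L \<mu> (\<lambda>x. (Pt T x)\<^sup>2) + (- 2 * m) * m + m\<^sup>2"
        by (simp add: m_def)
      finally show ?thesis .
    qed
    also have "\<dots> \<le> integral\<^sup>L \<mu> (\<lambda>x. (Pt T x)\<^sup>2)" by (simp add: power2_eq_square)
    also have "\<dots> \<le> integral\<^sup>L \<mu> (\<lambda>x. T * x\<^sup>2)"
    proof (rule integral_mono)
      show "integrable \<mu> (\<lambda>x. (Pt T x)\<^sup>2)"
        by (rule mu.integrable_const_bound[where B="T*T"])
           (auto intro!: AE_I2 mu_meas simp: power2_eq_square Pt_nn Pt_le T mult_mono)
      show "integrable \<mu> (\<lambda>x. T * x\<^sup>2)" using int2 by simp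
    qed (rule Pt_sq[OF T])
    also have "\<dots> = T" using one by simp
    finally show ?thesis .
  qed
  have EZs: "integral\<^sup>L M (\<lambda>\<omega>. (Zs \<omega>)\<^sup>2) \<le> real k * T"
  proof -
    have "integral\<^sup>L M (\<lambda>\<omega>. (Zs \<omega>)\<^sup>2) = integral\<^sup>L M (\<lambda>\<omega>. \<Sum>i<k. \<Sum>j<k. Z i \<omega> * Z j \<omega>)"
      unfolding Zs_def power2_eq_square sum_product by simp
    also have "\<dots> = (\<Sum>i<k. integral\<^sup>L M (\<lambda>\<omega>. \<Sum>j<k. Z i \<omega> * Z j \<omega>))"
      by (rule Bochner_Integration.integral_sum) (auto intro!: Bochner_Integration.integrable_sum intZZ)
    also have "\<dots> = (\<Sum>i<k. \<Sum>j<k. integral\<^sup>L M (\<lambda>\<omega>. Z i \<omega> * Z j \<omega>))"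
      by (intro sum.cong refl Bochner_Integration.integral_sum) (auto intro: intZZ)
    also have "\<dots> = (\<Sum>i<k. integral\<^sup>L M (\<lambda>\<omega>. Z i \<omega> * Z i \<omega>))"
    proof (rule sum.cong[OF refl])
      fix i assume i: "i \<in> {..<k}"
      have "(\<Sum>j<k. integral\<^sup>L M (\<lambda>\<omega>. Z i \<omega> * Z j \<omega>)) = (\<Sum>j<k. if j = i then integral\<^sup>L M (\<lambda>\<omega>. Z i \<omega> * Z i \<omega>) else 0)"
        by (rule sum.cong[OF refl]) (use i cross in auto)
      then show "(\<Sum>j<k. integral\<^sup>L M (\<lambda>\<omega>. Z i \<omega> * Z j \<omega>)) = integral\<^sup>L M (\<lambda>\<omega>. Z i \<omega> * Z i \<omega>)"
        using i by simp
    qed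
    also have "\<dots> \<le> (\<Sum>i<k. T)" by (rule sum_mono) (simp add: diag)
    finally show ?thesis by simp
  qed
  have intZs2: "integrable M (\<lambda>\<omega>. (Zs \<omega>)\<^sup>2)"
    unfolding Zs_def power2_eq_square sum_product
    by (auto intro!: Bochner_Integration.integrable_sum intZZ)
  have c0: "0 < (real k * e / 3)\<^sup>2" using k e by simp
  have markov2: "measure M {\<omega>\<in>space M. (real k * e / 3)\<^sup>2 \<le> (Zs \<omega>)\<^sup>2} \<le> 9 * T / (real k * e\<^sup>2)"
  proof -
    have "measure M {\<omega>\<in>space M. (Zs \<omega>)\<^sup>2 \<ge> (real k * e / 3)\<^sup>2} \<le> integral\<^sup>L M (\<lambda>\<omega>. (Zs \<omega>)\<^sup>2) / (real k * e / 3)\<^sup>2"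
      by (rule integral_Markov_inequality_measure[OF intZs2, where A="space M"]) (use c0 in auto)
    also have "\<dots> \<le> real k * T / (real k * e / 3)\<^sup>2"
      by (rule divide_right_mono[OF EZs]) (use c0 in simp)
    also have "\<dots> = 9 * T / (real k * e\<^sup>2)"
      using k e by (simp add: power2_eq_square field_simps)
    finally show ?thesis by simp
  qed
  have "measure M {\<omega>\<in>space M. e < dist (SS k (\<lambda>i. Y i \<omega>)) 1}
      \<le> measure M ({\<omega>\<in>space M. e/3 \<le> aQ \<omega>} \<union> {\<omega>\<in>space M. (real k * e / 3)\<^sup>2 \<le> (Zs \<omega>)\<^sup>2})"
    by (rule finite_measure_mono[OF incl]) (use setA setB in auto)
  also have "\<dots> \<le> measure M {\<omega>\<in>space M. e/3 \<le> aQ \<omega>} + measure M {\<omega>\<in>space M. (real k * e / 3)\<^sup>2 \<le> (Zs \<omega>)\<^sup>2}"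
    by (rule measure_Un_le[OF setA setB])
  also have "\<dots> \<le> 3 * \<tau> / e + 9 * T / (real k * e\<^sup>2)"
    using markov1 markov2 by linarith
  finally show ?thesis by (simp add: \<tau>_def)
qed

lemma wlln:
  fixes M :: "'a measure" and A0 :: "nat \<Rightarrow> nat \<Rightarrow> 'a \<Rightarrow> real"
  assumes P: "prob_space M"
    and measA: "\<And>k i. i < k \<Longrightarrow> A0 k i \<in> borel_measurable M"
    and ind: "\<And>k. prob_space.indep_vars M (\<lambda>_. borel) (A0 k) {..<k}"
    and dst: "\<And>k i k' i'. i < k \<Longrightarrow> i' < k' \<Longrightarrow> distr M borel (A0 k i) = distr M borel (A0 k' i')"
    and int2: "\<And>k i. i < k \<Longrightarrow> integrable M (\<lambda>\<omega>. (A0 k i \<omega>)\<^sup>2)"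
    and one: "\<And>k i. i < k \<Longrightarrow> (\<integral>\<omega>. (A0 k i \<omega>)\<^sup>2 \<partial>M) = 1"
  shows "conv_in_prob M (\<lambda>k \<omega>. SS k (\<lambda>i. A0 k i \<omega>)) 1"
proof -
  interpret prob_space M by (rule P)
  define Y where "Y k i \<omega> = (if i < k then A0 k i \<omega> else 0)" for k i \<omega>
  have Ym[measurable]: "Y k i \<in> borel_measurable M" for k i
    unfolding Y_def by (cases "i < k") (simp_all add: measA)
  have SSY: "SS k (\<lambda>i. A0 k i \<omega>) = SS k (\<lambda>i. Y k i \<omega>)" for k \<omega>
    unfolding SS_def Y_def by simp
  have indY: "indep_vars (\<lambda>_. borel) (Y k) {..<k}" for k
    using ind[of k] by (rule indep_vars_cong[THEN iffD1, rotated 3]) (auto simp: Y_def)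
  define \<mu> where "\<mu> = distr M borel (A0 1 0)"
  have dY: "distr M borel (Y k i) = \<mu>" if "i < k" for k i
  proof -
    have "Y k i = A0 k i" using that by (simp add: Y_def fun_eq_iff)
    then show ?thesis unfolding \<mu>_def using dst[OF that, of 0 1] by simp
  qed
  have m10[measurable]: "A0 1 0 \<in> borel_measurable M" using measA[of 0 1] by simp
  have sets_mu: "sets \<mu> = sets borel" by (simp add: \<mu>_def)
  have int\<mu>: "integrable \<mu> (\<lambda>x. x\<^sup>2)"
    unfolding \<mu>_def by (subst integrable_distr_eq) (use int2[of 0 1] measA[of 0 1] in auto)
  have one\<mu>: "integral\<^sup>L \<mu> (\<lambda>x. x\<^sup>2) = 1"
    unfolding \<mu>_def by (subst integral_distr) (use one[of 0 1] measA[of 0 1] in auto)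
  show ?thesis unfolding conv_in_prob_def SSY
  proof (intro conjI allI impI)
    show "(\<lambda>\<omega>. SS k (\<lambda>i. Y k i \<omega>)) \<in> borel_measurable M" for k
      unfolding SS_def by measurable
    fix e :: real assume e: "e > 0"
    show "(\<lambda>k. measure M {\<omega> \<in> space M. e < dist (SS k (\<lambda>i. Y k i \<omega>)) 1}) \<longlonglongrightarrow> 0"
    proof (rule LIMSEQ_I)
      fix r :: real assume r: "r > 0"
      have r': "min (e/3) (r * e / 6) > 0" using e r by simp
      obtain n0 :: nat where n0: "integral\<^sup>L \<mu> (Qt (real n0)) < min (e/3) (r * e / 6)"
        using tail_small[OF int\<mu> r' sets_mu] by blast
      define T where "T = real n0"
      have T: "T \<ge> 0" by (simp add: T_def)
      obtain N :: nat where N: "18 * T / (e\<^sup>2 * r) < real N" using reals_Archimedean2 by blast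
      show "\<exists>no. \<forall>n\<ge>no. norm (measure M {\<omega> \<in> space M. e < dist (SS n (\<lambda>i. Y n i \<omega>)) 1} - 0) < r"
      proof (intro exI allI impI)
        fix n assume n: "max N 1 \<le> n"
        then have n0': "n > 0" by simp
        have bnd: "measure M {\<omega> \<in> space M. e < dist (SS n (\<lambda>i. Y n i \<omega>)) 1}
            \<le> 3 * integral\<^sup>L \<mu> (Qt T) / e + 9 * T / (real n * e\<^sup>2)"
          by (rule wlln_bound[OF Ym indY dY int\<mu> one\<mu> n0' T e]) (use n0 T_def in auto)
        have b1: "3 * integral\<^sup>L \<mu> (Qt T) / e < r / 2"
          using n0 e unfolding T_def by (simp add: field_simps)
        have "real N \<le> real n" using n by simp
        then have "18 * T / (e\<^sup>2 * r) < real n" using N by linarith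
        then have "18 * T < real n * (e\<^sup>2 * r)" using e r by (simp add: field_simps)
        then have b2: "9 * T / (real n * e\<^sup>2) < r / 2" using e r n0' by (simp add: field_simps)
        have "0 \<le> measure M {\<omega> \<in> space M. e < dist (SS n (\<lambda>i. Y n i \<omega>)) 1}" by simp
        then show "norm (measure M {\<omega> \<in> space M. e < dist (SS n (\<lambda>i. Y n i \<omega>)) 1} - 0) < r"
          using bnd b1 b2 by simp
      qed
    qed
  qed
qed

lemma Gcont: "continuous_on UNIV (\<lambda>p::real\<times>real. Gfun X y eta (fst p))"
  unfolding Gfun_def uu_def rr_def by (intro continuous_intros)

lemma Hcont: "continuous_on UNIV (\<lambda>p::real\<times>real. Hfun X y eta (fst p) (snd p))"
  unfolding Hfun_def outer_def uu_def cc_def rr_def by (intro continuous_intros)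

lemma HG: "Hfun X y eta 1 0 = Gfun X y eta 1"
  unfolding Hfun_def Gfun_def outer_def by (simp add: vec_eq_iff power2_eq_square mult_ac)

theorem proposition4:
  fixes M :: "'a measure" and A0 :: "nat \<Rightarrow> nat \<Rightarrow> 'a \<Rightarrow> real"
    and X :: "real^'n^'d" and y :: "real^'n" and eta :: real
  assumes "prob_space M"
    and "eta > 0"
    and "\<And>k i. i < k \<Longrightarrow> A0 k i \<in> borel_measurable M"
    and "\<And>k. prob_space.indep_vars M (\<lambda>_. borel) (A0 k) {..<k}"
    and "\<And>k i k' i'. i < k \<Longrightarrow> i' < k' \<Longrightarrow> distr M borel (A0 k i) = distr M borel (A0 k' i')"
    and "\<And>k i. i < k \<Longrightarrow> integrable M (\<lambda>\<omega>. (A0 k i \<omega>)\<^sup>2)"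
    and "\<And>k i. i < k \<Longrightarrow> (\<integral>\<omega>. (A0 k i \<omega>)\<^sup>2 \<partial>M) = 1"
  shows "\<exists>L :: real^'d^'d.
     conv_in_prob M (\<lambda>k \<omega>. gram k (snd (gd k eta X y (\<lambda>i. A0 k i \<omega>) (\<lambda>i. 0) 2))) L \<and>
     conv_in_prob M (\<lambda>k \<omega>. outer (case gd k eta X y (\<lambda>i. A0 k i \<omega>) (\<lambda>i. 0) 2 of
                                    (A, B) \<Rightarrow> net_grad k A B)) L"
proof -
  have W: "conv_in_prob M (\<lambda>k \<omega>. SS k (\<lambda>i. A0 k i \<omega>)) 1"
    by (rule wlln[OF assms(1) assms(3-7)])
  have C1: "conv_in_prob M (\<lambda>k \<omega>. Gfun X y eta (SS k (\<lambda>i. A0 k i \<omega>))) (Gfun X y eta 1)"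
    using Gcont[of X y eta] by (rule conv_compose[OF assms(1) W, of "\<lambda>s t. Gfun X y eta s"])
  have C2: "conv_in_prob M (\<lambda>k \<omega>. Hfun X y eta (SS k (\<lambda>i. A0 k i \<omega>)) (1 / real k)) (Gfun X y eta 1)"
    using Hcont[of X y eta] conv_compose[OF assms(1) W, of "\<lambda>s t. Hfun X y eta s t"] unfolding HG by blast
  show ?thesis
  proof (intro exI conjI)
    show "conv_in_prob M (\<lambda>k \<omega>. gram k (snd (gd k eta X y (\<lambda>i. A0 k i \<omega>) (\<lambda>i. 0) 2))) (Gfun X y eta 1)"
      using C1 by (simp only: gram_gd2)
    show "conv_in_prob M (\<lambda>k \<omega>. outer (case gd k eta X y (\<lambda>i. A0 k i \<omega>) (\<lambda>i. 0) 2 of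
                                    (A, B) \<Rightarrow> net_grad k A B)) (Gfun X y eta 1)"
      using C2 by (simp only: grad_gd2)
  qed
qed

end
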